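(* Let $\mu\in L^\infty(\mathbb{D})$ with $\|\mu\|_{L^\infty(\mathbb{D})}\le1$ and put $g=\mathbf{P}\mu$. Then for every $t\in\mathbb{C}$ with $|t|\le\pi/16$, \[ \int_\mathbb{D}\big|\mathrm{e}^{t g(z)}\big|\,\mathrm{d}A(z)\le 4 . \]
   Context: $\mathbb{D}$ is the open unit disk, $\mathrm{d}A$ is normalized area measure ($\mathrm{d}A=\pi^{-1}\mathrm{d}x\,\mathrm{d}y$). For $\mu\in L^1(\mathbb{D})$, the Bergman projection is $\mathbf{P}\mu(z)=\int_\mathbb{D}\frac{\mu(w)}{(1-z\bar w)^2}\,\mathrm{d}A(w)$, $z\in\mathbb{D}$. *)

theory Defs
  imports "HOL-Analysis.Analysis"
begin

abbreviation unit_disk :: "complex set" where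
  "unit_disk \<equiv> ball 0 1"

text \<open>Bergman projection with respect to normalized area measure dA = pi^-1 dx dy
  (Lebesgue measure on the complex plane divided by pi).\<close>
definition bergman_proj :: "(complex \<Rightarrow> complex) \<Rightarrow> complex \<Rightarrow> complex" where
  "bergman_proj \<mu> z =
     complex_of_real (1 / pi) *
       (LINT w : unit_disk | lebesgue. \<mu> w / (1 - z * cnj w) ^ 2)"

end

theory Submission
  imports Defs
begin


lemma tonelli_cr:
  fixes G :: "complex \<Rightarrow> real \<Rightarrow> ennreal"
  assumes "case_prod G \<in> borel_measurable (lborel \<Otimes>\<^sub>M lborel)"
  shows "(\<integral>\<^sup>+w. (\<integral>\<^sup>+s. G w s \<partial>lborel) \<partial>lborel) = (\<integral>\<^sup>+s. (\<integral>\<^sup>+w. G w s \<partial>lborel) \<partial>lborel)"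
  using assms by (subst lborel_pair.Fubini') auto

lemma recip_sq_integral:
  fixes r :: real assumes "r > 0"
  shows "(\<integral>\<^sup>+s. ennreal (2 / s^3) * indicator {r..} s \<partial>lborel) = ennreal (1 / r^2)"
proof -
  have "(\<integral>\<^sup>+s. ennreal (2 / s^3) * indicator {r..} s \<partial>lborel) = ennreal (0 - (- 1 / r^2))"
  proof (rule nn_integral_FTC_atLeast)
    show "(\<lambda>s::real. 2 / s^3) \<in> borel_measurable borel" by measurable
    show "DERIV (\<lambda>s. - 1 / s^2) x :> 2 / x^3" if "r \<le> x" for x
      using that assms by (auto intro!: derivative_eq_intros simp: field_simps power_def eval_nat_numeral)
    show "0 \<le> 2 / x^3" if "r \<le> x" for x :: real using that assms by simp
    show "((\<lambda>s::real. - 1 / s^2) \<longlongrightarrow> 0) at_top" by real_asymp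
  qed
  then show ?thesis by simp
qed



lemma em_cball: "r \<ge> 0 \<Longrightarrow> emeasure lborel (cball (c::complex) r) = ennreal (pi * r^2)"
  using emeasure_cball[of r c] by (simp add: unit_ball_vol_2)

lemma em_ball: "r \<ge> 0 \<Longrightarrow> emeasure lborel (ball (c::complex) r) = ennreal (pi * r^2)"
  using emeasure_ball[of r c] by (simp add: unit_ball_vol_2)

lemma em_disk: "emeasure lborel unit_disk = ennreal pi"
  using em_ball[of 1 0] by simp

lemma em_annulus:
  assumes "0 \<le> d" "d \<le> s"
  shows "emeasure lborel (cball (c::complex) s - ball c d) = ennreal (pi * s^2 - pi * d^2)"
proof -
  have "emeasure lborel (cball c s - ball c d) = emeasure lborel (cball c s) - emeasure lborel (ball c d)"
    using assms by (intro emeasure_Diff) (auto simp: em_ball)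
  also have "\<dots> = ennreal (pi * s^2 - pi * d^2)"
    using assms by (simp add: em_ball em_cball ennreal_minus power_mono)
  finally show ?thesis .
qed



lemma kernel_int_bound:
  fixes z :: complex assumes z0: "z \<noteq> 0" and z1: "norm z < 1"
  shows "(\<integral>\<^sup>+w. ennreal (indicator unit_disk w / (norm (1 - z * cnj w))^2) \<partial>lborel)
     \<le> ennreal (pi * (ln (1 + ((1 - norm z)/norm z)^2) - 2 * ln ((1 - norm z)/norm z)) / (norm z)^2)"
proof -
  define \<rho> where "\<rho> = norm z"
  define d where "d = (1 - \<rho>) / \<rho>"
  define q where "q = 1 / cnj z"
  define S where "S = sqrt (1 + d^2)"
  have \<rho>0: "\<rho> > 0" and \<rho>1: "\<rho> < 1" using z0 z1 by (auto simp: \<rho>_def)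
  have d0: "d > 0" using \<rho>0 \<rho>1 by (simp add: d_def)
  have dS: "d \<le> S" unfolding S_def by (rule real_le_rsqrt) simp
  have S0: "S > 0" using d0 dS by simp
  have SS: "S^2 = 1 + d^2" unfolding S_def by simp
  have kern: "norm (1 - z * cnj w) = \<rho> * dist w q" for w
  proof -
    have "1 - z * cnj w = z * (1 / z - cnj w)" using z0 by (simp add: field_simps)
    hence "norm (1 - z * cnj w) = \<rho> * norm (1 / z - cnj w)" by (simp add: \<rho>_def norm_mult)
    also have "norm (1 / z - cnj w) = norm (cnj (1 / z - cnj w))" by (rule complex_mod_cnj[symmetric])
    also have "cnj (1 / z - cnj w) = q - w" by (simp add: q_def)
    finally show ?thesis by (simp add: dist_norm norm_minus_commute)
  qed
  have far: "dist w q > d" if "w \<in> unit_disk" for w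
  proof -
    have "norm q = 1 / \<rho>" by (simp add: q_def \<rho>_def norm_divide)
    have "norm w < 1" using that by simp
    have "dist w q \<ge> norm q - norm w" by (simp add: dist_norm norm_minus_commute norm_triangle_ineq2)
    moreover have "norm q - norm w > 1/\<rho> - 1" using \<open>norm q = 1/\<rho>\<close> \<open>norm w < 1\<close> by simp
    moreover have "1/\<rho> - 1 = d" using \<rho>0 by (simp add: d_def field_simps)
    ultimately show ?thesis by simp
  qed
  define H where "H = (\<lambda>w s. ennreal (1/\<rho>^2) * indicator unit_disk w * ennreal (2 / s^3) * indicator {dist w q..} s)"
  have step1: "ennreal (indicator unit_disk w / (norm (1 - z * cnj w))^2) = (\<integral>\<^sup>+s. H w s \<partial>lborel)" for w
  proof (cases "w \<in> unit_disk")
    case True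
    have dpos: "dist w q > 0" using far[OF True] d0 by linarith
    have "(\<integral>\<^sup>+s. H w s \<partial>lborel) = (\<integral>\<^sup>+s. ennreal (1/\<rho>^2) * (ennreal (2 / s^3) * indicator {dist w q..} s) \<partial>lborel)"
      using True by (intro nn_integral_cong) (simp add: H_def mult.assoc)
    also have "\<dots> = ennreal (1/\<rho>^2) * (\<integral>\<^sup>+s. ennreal (2 / s^3) * indicator {dist w q..} s \<partial>lborel)"
      by (rule nn_integral_cmult) measurable
    also have "\<dots> = ennreal (1/\<rho>^2) * ennreal (1 / (dist w q)^2)"
      using dpos by (simp add: recip_sq_integral)
    also have "\<dots> = ennreal (indicator unit_disk w / (norm (1 - z * cnj w))^2)"
      using True \<rho>0 dpos by (simp add: kern ennreal_mult' [symmetric] power_mult_distrib)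
    finally show ?thesis ..
  next
    case False
    then show ?thesis by (simp add: H_def)
  qed
  have meas: "case_prod H \<in> borel_measurable (lborel \<Otimes>\<^sub>M lborel)"
  proof -
    have e1: "unit_disk \<times> (UNIV::real set) \<in> sets borel" by (intro borel_open open_Times) auto
    have e2: "{p::complex\<times>real. dist (fst p) q \<le> snd p} \<in> sets borel"
      by (intro borel_closed closed_Collect_le continuous_intros)
    have m1[measurable]: "(\<lambda>p::complex\<times>real. indicator (unit_disk \<times> (UNIV::real set)) p :: real) \<in> borel_measurable borel"
      using borel_measurable_indicator[OF e1] by simp
    have m2[measurable]: "(\<lambda>p::complex\<times>real. indicator {p::complex\<times>real. dist (fst p) q \<le> snd p} p :: real) \<in> borel_measurable borel"
      using borel_measurable_indicator[OF e2] by simp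
    have m3[measurable]: "(\<lambda>p::complex\<times>real. 2 / (snd p)^3) \<in> borel_measurable borel"
      by (intro borel_measurable_divide borel_measurable_continuous_onI continuous_intros)
    have "(\<lambda>p::complex\<times>real. ennreal (1/\<rho>^2) * indicator (unit_disk \<times> (UNIV::real set)) p * ennreal (2 / (snd p)^3)
           * indicator {p::complex\<times>real. dist (fst p) q \<le> snd p} p) \<in> borel_measurable borel"
      by (intro borel_measurable_times_ennreal borel_measurable_indicator e1 e2 measurable_compose[OF m3 measurable_ennreal] borel_measurable_const)
    moreover have "case_prod H = (\<lambda>p::complex\<times>real. ennreal (1/\<rho>^2) * indicator (unit_disk \<times> (UNIV::real set)) p * ennreal (2 / (snd p)^3)
           * indicator {p. dist (fst p) q \<le> snd p} p)"
      by (auto simp: H_def fun_eq_iff indicator_def)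
    ultimately show ?thesis by (simp add: lborel_prod)
  qed
  have "(\<integral>\<^sup>+w. ennreal (indicator unit_disk w / (norm (1 - z * cnj w))^2) \<partial>lborel)
        = (\<integral>\<^sup>+w. (\<integral>\<^sup>+s. H w s \<partial>lborel) \<partial>lborel)"
    by (simp add: step1)
  also have "\<dots> = (\<integral>\<^sup>+s. (\<integral>\<^sup>+w. H w s \<partial>lborel) \<partial>lborel)"
    by (rule tonelli_cr[OF meas])
  also have "\<dots> = (\<integral>\<^sup>+s. ennreal (1/\<rho>^2) * ennreal (2 / s^3) * emeasure lborel (unit_disk \<inter> cball q s) \<partial>lborel)"
  proof (intro nn_integral_cong)
    fix s :: real
    have "(\<integral>\<^sup>+w. H w s \<partial>lborel) = (\<integral>\<^sup>+w. (ennreal (1/\<rho>^2) * ennreal (2 / s^3)) * indicator (unit_disk \<inter> cball q s) w \<partial>lborel)"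
      by (intro nn_integral_cong) (auto simp: H_def indicator_def dist_commute)
    also have "\<dots> = ennreal (1/\<rho>^2) * ennreal (2 / s^3) * emeasure lborel (unit_disk \<inter> cball q s)"
      by (rule nn_integral_cmult_indicator) simp
    finally show "(\<integral>\<^sup>+w. H w s \<partial>lborel) = \<dots>" .
  qed
  also have "\<dots> \<le> (\<integral>\<^sup>+s. ennreal (1/\<rho>^2) * (ennreal (2*pi*(s^2-d^2)/s^3) * indicator {d..S} s
                   + ennreal (2*pi/s^3) * indicator {S..} s) \<partial>lborel)"
  proof (intro nn_integral_mono)
    fix s :: real
    have "ennreal (2 / s^3) * emeasure lborel (unit_disk \<inter> cball q s)
          \<le> ennreal (2*pi*(s^2-d^2)/s^3) * indicator {d..S} s + ennreal (2*pi/s^3) * indicator {S..} s"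
    proof (cases "s < d")
      case True
      have "unit_disk \<inter> cball q s = {}" using far True by (force simp: dist_commute)
      then show ?thesis by simp
    next
      case False
      hence ds: "d \<le> s" by simp
      hence s0: "s > 0" using d0 by simp
      show ?thesis
      proof (cases "s \<le> S")
        case True
        have "emeasure lborel (unit_disk \<inter> cball q s) \<le> emeasure lborel (cball q s - ball q d)"
          using far by (intro emeasure_mono) (auto simp: dist_commute dest!: far)
        also have "\<dots> = ennreal (pi * s^2 - pi * d^2)" using ds d0 by (intro em_annulus) auto
        finally have "ennreal (2 / s^3) * emeasure lborel (unit_disk \<inter> cball q s)
              \<le> ennreal (2 / s^3) * ennreal (pi * s^2 - pi * d^2)" by (rule mult_left_mono) simp
        also have "\<dots> = ennreal (2*pi*(s^2-d^2)/s^3)"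
          using s0 ds d0 by (subst ennreal_mult'[symmetric]) (auto simp: field_simps power_mono)
        also have "\<dots> \<le> ennreal (2*pi*(s^2-d^2)/s^3) * indicator {d..S} s + ennreal (2*pi/s^3) * indicator {S..} s"
          using ds True by simp
        finally show ?thesis .
      next
        case False
        have "emeasure lborel (unit_disk \<inter> cball q s) \<le> ennreal pi"
          unfolding em_disk[symmetric] by (intro emeasure_mono) auto
        hence "ennreal (2 / s^3) * emeasure lborel (unit_disk \<inter> cball q s)
              \<le> ennreal (2 / s^3) * ennreal pi" by (rule mult_left_mono) simp
        also have "\<dots> = ennreal (2*pi/s^3)"
          using s0 by (subst ennreal_mult'[symmetric]) auto
        also have "\<dots> \<le> ennreal (2*pi*(s^2-d^2)/s^3) * indicator {d..S} s + ennreal (2*pi/s^3) * indicator {S..} s"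
          using False by simp
        finally show ?thesis .
      qed
    qed
    then show "ennreal (1/\<rho>^2) * ennreal (2 / s^3) * emeasure lborel (unit_disk \<inter> cball q s)
         \<le> ennreal (1/\<rho>^2) * (ennreal (2*pi*(s^2-d^2)/s^3) * indicator {d..S} s
                   + ennreal (2*pi/s^3) * indicator {S..} s)"
      by (simp add: mult.assoc mult_left_mono)
  qed
  also have "\<dots> = ennreal (1/\<rho>^2) * ((\<integral>\<^sup>+s. ennreal (2*pi*(s^2-d^2)/s^3) * indicator {d..S} s \<partial>lborel)
                   + (\<integral>\<^sup>+s. ennreal (2*pi/s^3) * indicator {S..} s \<partial>lborel))"
    by (subst nn_integral_cmult) (measurable, subst nn_integral_add, auto)
  also have "(\<integral>\<^sup>+s. ennreal (2*pi*(s^2-d^2)/s^3) * indicator {d..S} s \<partial>lborel)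
       = ennreal (pi * (2 * ln S + d^2/S^2) - pi * (2 * ln d + d^2/d^2))"
  proof (rule nn_integral_FTC_Icc)
    show "(\<lambda>s::real. 2*pi*(s^2-d^2)/s^3) \<in> borel_measurable borel" by measurable
    show "DERIV (\<lambda>s. pi * (2 * ln s + d^2/s^2)) x :> 2*pi*(x^2-d^2)/x^3" if "x \<in> {d..S}" for x
      using that d0 by (auto intro!: derivative_eq_intros simp: field_simps power_def eval_nat_numeral)
    show "0 \<le> 2*pi*(x^2-d^2)/x^3" if "x \<in> {d..S}" for x
      using that d0 by (auto intro!: divide_nonneg_pos mult_nonneg_nonneg power_mono)
    show "d \<le> S" by (rule dS)
  qed
  also have "(\<integral>\<^sup>+s. ennreal (2*pi/s^3) * indicator {S..} s \<partial>lborel) = ennreal (0 - (- pi / S^2))"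
  proof (rule nn_integral_FTC_atLeast)
    show "(\<lambda>s::real. 2*pi/s^3) \<in> borel_measurable borel" by measurable
    show "DERIV (\<lambda>s. - pi / s^2) x :> 2*pi/x^3" if "S \<le> x" for x
      using that S0 by (auto intro!: derivative_eq_intros simp: field_simps power_def eval_nat_numeral)
    show "0 \<le> 2*pi/x^3" if "S \<le> x" for x :: real using that S0 by simp
    show "((\<lambda>s::real. - pi / s^2) \<longlongrightarrow> 0) at_top" by real_asymp
  qed
  finally have main: "(\<integral>\<^sup>+w. ennreal (indicator unit_disk w / (norm (1 - z * cnj w))^2) \<partial>lborel)
     \<le> ennreal (1/\<rho>^2) * (ennreal (pi * (2 * ln S + d^2/S^2) - pi * (2 * ln d + d^2/d^2)) + ennreal (0 - (- pi / S^2)))" .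
  have lnS: "2 * ln S = ln (1 + d^2)" unfolding S_def by (simp add: ln_sqrt)
  have dd: "d^2/d^2 = 1" using d0 by simp
  have h1: "1 + d^2 \<noteq> 0" by (metis add_pos_nonneg less_numeral_extra(3) zero_le_power2 zero_less_one)
  have lnge: "ln ((1 + d^2) / d^2) \<ge> 1 / (1 + d^2)"
  proof -
    have "ln (d^2 / (1 + d^2)) \<le> d^2 / (1 + d^2) - 1" using d0 by (intro ln_le_minus_one divide_pos_pos) (auto simp: add_pos_nonneg)
    moreover have "ln (d^2 / (1 + d^2)) = - ln ((1 + d^2) / d^2)" using d0 by (simp add: ln_div)
    moreover have "d^2 / (1 + d^2) - 1 = - (1 / (1 + d^2))" using h1 by (simp add: field_simps)
    ultimately show ?thesis by linarith
  qed
  have lnd: "ln ((1 + d^2) / d^2) = ln (1 + d^2) - 2 * ln d" using d0 h1 by (simp add: ln_div ln_realpow)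
  have nonneg: "0 \<le> pi * (2 * ln S + d^2/S^2) - pi * (2 * ln d + d^2/d^2)"
  proof -
    have "d^2/S^2 - 1 = - (1 / (1 + d^2))" using SS d0 h1 by (simp add: field_simps)
    hence "0 \<le> (2 * ln S - 2 * ln d) + (d^2/S^2 - 1)" using lnge lnd lnS by linarith
    hence "0 \<le> pi * ((2 * ln S - 2 * ln d) + (d^2/S^2 - 1))" by simp
    thus ?thesis using dd by (simp add: algebra_simps)
  qed
  have tot: "(pi * (2 * ln S + d^2/S^2) - pi * (2 * ln d + d^2/d^2)) + (0 - (- pi / S^2)) = pi * (ln (1 + d^2) - 2 * ln d)"
  proof -
    have "d^2/S^2 + 1/S^2 = 1" using SS h1 by (simp add: field_simps)
    hence "pi * (d^2/S^2) + pi / S^2 = pi" by (metis (no_types, lifting) distrib_left mult.right_neutral times_divide_eq_right)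
    thus ?thesis using lnS dd by (simp add: algebra_simps)
  qed
  have "ennreal (1/\<rho>^2) * (ennreal (pi * (2 * ln S + d^2/S^2) - pi * (2 * ln d + d^2/d^2)) + ennreal (0 - (- pi / S^2)))
      = ennreal (1/\<rho>^2) * ennreal (pi * (ln (1 + d^2) - 2 * ln d))"
  proof -
    have "ennreal (pi * (2 * ln S + d^2/S^2) - pi * (2 * ln d + d^2/d^2)) + ennreal (0 - (- pi / S^2))
       = ennreal ((pi * (2 * ln S + d^2/S^2) - pi * (2 * ln d + d^2/d^2)) + (0 - (- pi / S^2)))"
      using nonneg S0 by (intro ennreal_plus[symmetric]) auto
    then show ?thesis by (simp only: tot)
  qed
  also have "\<dots> = ennreal (pi * (ln (1 + d^2) - 2 * ln d) / \<rho>^2)"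
    using nonneg tot S0 by (subst ennreal_mult'[symmetric]) (auto simp: field_simps)
  finally show ?thesis using main by (simp add: \<rho>_def d_def)
qed



lemma deriv_aux: "y < (1::real) \<Longrightarrow> ((\<lambda>y::real. (y - y^2/2) / (1 - y) + ln (1 - y)) has_field_derivative y^2 / (2*(1-y)^2)) (at y)"
  apply (rule derivative_eq_intros refl | simp)+
  apply (subgoal_tac "1 - y \<noteq> 0")
  apply (simp add: divide_simps power2_eq_square)
  apply (simp add: algebra_simps)
  apply simp
  done

lemma neg_ln_bound:
  fixes x :: real assumes "0 \<le> x" "x < 1"
  shows "- ln (1 - x) \<le> (x - x^2/2) / (1 - x)"
proof -
  define f where "f = (\<lambda>y::real. (y - y^2/2) / (1 - y) + ln (1 - y))"
  have "f 0 \<le> f x"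
  proof (rule DERIV_nonneg_imp_nondecreasing[of 0 x f])
    show "0 \<le> x" by fact
    fix y assume y: "0 \<le> y" "y \<le> x"
    hence y1: "y < 1" using assms by simp
    have "DERIV f y :> y^2 / (2*(1-y)^2)"
      unfolding f_def using deriv_aux[OF y1] .
    moreover have "y^2 / (2 * (1-y)^2) \<ge> 0" by simp
    ultimately show "\<exists>y'. DERIV f y :> y' \<and> 0 \<le> y'" by auto
  qed
  then show ?thesis by (simp add: f_def)
qed

lemma B_bound:
  fixes \<rho> :: real assumes r0: "0 < \<rho>" and r1: "\<rho> < 1"
  shows "(ln (1 + ((1 - \<rho>)/\<rho>)^2) - 2 * ln ((1 - \<rho>)/\<rho>)) / \<rho>^2 \<le> 3 + 2 * ln (1 / (1 - \<rho>))"
proof -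
  define U where "U = - ln (1 - \<rho>)"
  have Ub: "U * (1 - \<rho>) \<le> \<rho> - \<rho>^2/2"
    using neg_ln_bound[of \<rho>] r0 r1 by (simp add: U_def field_simps)
  have e1: "1 + ((1 - \<rho>)/\<rho>)^2 = (\<rho>^2 + (1 - \<rho>)^2) / \<rho>^2" using r0 by (simp add: field_simps)
  have pos: "\<rho>^2 + (1 - \<rho>)^2 > 0" using r0 by (simp add: add_pos_nonneg)
  have e2: "ln (1 + ((1 - \<rho>)/\<rho>)^2) - 2 * ln ((1 - \<rho>)/\<rho>) = ln (\<rho>^2 + (1 - \<rho>)^2) + 2 * U"
    using r0 r1 pos unfolding e1 U_def by (simp add: ln_div ln_realpow)
  have l1: "ln (\<rho>^2 + (1 - \<rho>)^2) \<le> - 2 * \<rho> * (1 - \<rho>)"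
    using ln_le_minus_one[OF pos] by (simp add: algebra_simps power2_eq_square)
  have key: "2 * U * (1 - \<rho>^2) \<le> \<rho>^2 + 2 * \<rho>"
  proof -
    have "2 * U * (1 - \<rho>^2) = 2 * (U * (1 - \<rho>)) * (1 + \<rho>)" by (simp add: algebra_simps power2_eq_square)
    also have "\<dots> \<le> 2 * (\<rho> - \<rho>^2/2) * (1 + \<rho>)" using Ub r0 by (intro mult_right_mono) auto
    also have "\<dots> \<le> \<rho>^2 + 2 * \<rho>" using r0 by (simp add: algebra_simps power2_eq_square power3_eq_cube)
    finally show ?thesis .
  qed
  have "ln (\<rho>^2 + (1 - \<rho>)^2) + 2 * U \<le> (3 + 2 * U) * \<rho>^2"
    using l1 key by (simp add: algebra_simps power2_eq_square)
  hence "(ln (\<rho>^2 + (1 - \<rho>)^2) + 2 * U) / \<rho>^2 \<le> 3 + 2 * U"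
    using r0 by (simp add: divide_le_eq)
  moreover have "ln (1 / (1 - \<rho>)) = U" using r1 by (simp add: U_def ln_div)
  ultimately show ?thesis by (simp add: e2)
qed



lemma sing_int:
  fixes \<beta> :: real assumes b0: "0 \<le> \<beta>" and b1: "\<beta> < 1"
  shows "(\<integral>\<^sup>+s. ennreal ((1 - s) powr (-\<beta>) * (1 + s) * indicator {0..1} s) \<partial>lborel)
       = ennreal (2/(1-\<beta>) - 1/(2-\<beta>))"
proof -
  define G where "G = (\<lambda>s::real. - 2 * (1 - s) powr (1 - \<beta>) / (1 - \<beta>) + (1 - s) powr (2 - \<beta>) / (2 - \<beta>))"
  define h where "h = (\<lambda>s::real. (1 - s) powr (-\<beta>) * (1 + s))"
  have "(h has_integral (G 1 - G 0)) {0..1}"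
  proof (rule fundamental_theorem_of_calculus_interior)
    show "continuous_on {0..1} G" unfolding G_def using b1
      by (intro continuous_intros continuous_on_powr') auto
    show "0 \<le> (1::real)" by simp
    fix x :: real assume x: "x \<in> {0<..<1}"
    have "(G has_real_derivative
          (- 2 * ((1 - \<beta>) * (1 - x) powr (1 - \<beta> - 1) * (-1)) / (1 - \<beta>)
           + (2 - \<beta>) * (1 - x) powr (2 - \<beta> - 1) * (-1) / (2 - \<beta>))) (at x)"
      unfolding G_def using x b1
      by (auto intro!: derivative_eq_intros)
    moreover have "- 2 * ((1 - \<beta>) * (1 - x) powr (1 - \<beta> - 1) * (-1)) / (1 - \<beta>)
           + (2 - \<beta>) * (1 - x) powr (2 - \<beta> - 1) * (-1) / (2 - \<beta>) = h x"
    proof -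
      have "(1 - x) powr (2 - \<beta> - 1) = (1 - x) powr (1 + (-\<beta>))" by (simp add: algebra_simps)
      also have "\<dots> = (1 - x) powr 1 * (1 - x) powr (-\<beta>)" by (rule powr_add)
      also have "\<dots> = (1 - x) powr (-\<beta>) * (1 - x)" using x by simp
      finally have e: "(1 - x) powr (1 - \<beta>) = (1 - x) * (1 - x) powr (-\<beta>)" by (simp add: algebra_simps)
      have e2: "(1 - x) powr (1 - \<beta> - 1) = (1 - x) powr (-\<beta>)" by simp
      have "- 2 * ((1 - \<beta>) * (1 - x) powr (1 - \<beta> - 1) * (-1)) / (1 - \<beta>)
           + (2 - \<beta>) * (1 - x) powr (2 - \<beta> - 1) * (-1) / (2 - \<beta>)
           = 2 * (1 - x) powr (-\<beta>) - (1 - x) powr (1 - \<beta>)"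
      proof -
        have nz: "1 - \<beta> \<noteq> 0" "2 - \<beta> \<noteq> 0" using b1 by auto
        have a1: "- 2 * ((1 - \<beta>) * P * (-1)) / (1 - \<beta>) = 2 * P" for P
          using nz by (simp add: field_simps)
        have a2: "(2 - \<beta>) * Q * (-1) / (2 - \<beta>) = - Q" for Q
          using nz by (simp add: field_simps)
        show ?thesis unfolding e2 a1 a2 by simp
      qed
      also have "\<dots> = h x" unfolding e h_def by (simp add: algebra_simps)
      finally show ?thesis .
    qed
    ultimately show "(G has_vector_derivative h x) (at x)"
      by (simp add: has_real_derivative_iff_has_vector_derivative)
  qed
  hence "((\<lambda>s. if s \<in> {0..1} then h s else 0) has_integral (G 1 - G 0)) UNIV"
    using has_integral_restrict_UNIV[of "{0..1}" h] by blast
  hence "((\<lambda>s. h s * indicator {0..1} s) has_integral (G 1 - G 0)) UNIV"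
    by (rule has_integral_cong[THEN iffD1, rotated]) (simp add: indicator_def)
  hence "integral\<^sup>N lborel (\<lambda>s. h s * indicator {0..1} s) = G 1 - G 0"
    by (intro nn_integral_has_integral_lborel) (auto simp: h_def indicator_def)
  moreover have "G 1 - G 0 = 2/(1-\<beta>) - 1/(2-\<beta>)" using b1 by (simp add: G_def)
  ultimately show ?thesis by (simp add: h_def)
qed



lemma aux1: "(b::real) * Q * (pi - pi * s^2) = pi * (b * (Q * (1 - s) * (1 + s)))"
  by (simp add: algebra_simps power2_eq_square)
lemma add_split:
  fixes \<beta> :: real
  assumes m2: "(\<lambda>s::real. ennreal ((1 - s) powr (-\<beta>) * (1 + s) * indicator {0..1} s)) \<in> borel_measurable lborel"
  shows "(\<integral>\<^sup>+s. ennreal (pi * indicator {-1..0::real} s) + ennreal pi * (ennreal \<beta> * ennreal ((1 - s) powr (-\<beta>) * (1 + s) * indicator {0..1} s)) \<partial>lborel) = (\<integral>\<^sup>+s. ennreal (pi * indicator {-1..0::real} s) \<partial>lborel) + ennreal pi * (ennreal \<beta> * (\<integral>\<^sup>+s. ennreal ((1 - s) powr (-\<beta>) * (1 + s) * indicator {0..1} s) \<partial>lborel))"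
proof -
  have m1: "(\<lambda>s::real. ennreal (pi * indicator {-1..0} s)) \<in> borel_measurable lborel" by measurable
  have "(\<integral>\<^sup>+s. ennreal (pi * indicator {-1..0::real} s) + ennreal pi * (ennreal \<beta> * ennreal ((1 - s) powr (-\<beta>) * (1 + s) * indicator {0..1} s)) \<partial>lborel)
      = (\<integral>\<^sup>+s. ennreal (pi * indicator {-1..0::real} s) \<partial>lborel) + (\<integral>\<^sup>+s. ennreal pi * (ennreal \<beta> * ennreal ((1 - s) powr (-\<beta>) * (1 + s) * indicator {0..1} s)) \<partial>lborel)"
    by (intro nn_integral_add m1 borel_measurable_times_ennreal borel_measurable_const m2)
  also have "(\<integral>\<^sup>+s. ennreal pi * (ennreal \<beta> * ennreal ((1 - s) powr (-\<beta>) * (1 + s) * indicator {0..1} s)) \<partial>lborel)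
      = ennreal pi * (\<integral>\<^sup>+s. ennreal \<beta> * ennreal ((1 - s) powr (-\<beta>) * (1 + s) * indicator {0..1} s) \<partial>lborel)"
    by (intro nn_integral_cmult borel_measurable_times_ennreal borel_measurable_const m2)
  also have "(\<integral>\<^sup>+s. ennreal \<beta> * ennreal ((1 - s) powr (-\<beta>) * (1 + s) * indicator {0..1} s) \<partial>lborel)
      = ennreal \<beta> * (\<integral>\<^sup>+s. ennreal ((1 - s) powr (-\<beta>) * (1 + s) * indicator {0..1} s) \<partial>lborel)"
    by (intro nn_integral_cmult m2)
  finally show ?thesis .
qed

lemma radial_int:
  fixes \<beta> :: real assumes b0: "0 \<le> \<beta>" and b1: "\<beta> < 1"
  shows "(\<integral>\<^sup>+z. ennreal (indicator unit_disk z * (1 - norm z) powr (-\<beta>)) \<partial>lborel)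
       \<le> ennreal (2 * pi / ((1 - \<beta>) * (2 - \<beta>)))"
proof -
  define f where "f = (\<lambda>s::real. \<beta> * (1 - s) powr (-\<beta> - 1))"
  have fm[measurable]: "f \<in> borel_measurable borel" unfolding f_def by measurable
  have f0: "f s \<ge> 0" for s unfolding f_def using b0 by simp
  define K where "K = (\<lambda>(z::complex) (s::real). indicator unit_disk z *
      (indicator {-1..0} s + ennreal (f s) * indicator {0..norm z} s) :: ennreal)"
  have stepa: "ennreal (indicator unit_disk z * (1 - norm z) powr (-\<beta>)) \<le> (\<integral>\<^sup>+s. K z s \<partial>lborel)" for z
  proof (cases "z \<in> unit_disk")
    case False then show ?thesis by simp
  next
    case True
    hence z1: "norm z < 1" by simp
    have "(\<integral>\<^sup>+s. K z s \<partial>lborel) = (\<integral>\<^sup>+s. indicator {-1..0} s + ennreal (f s) * indicator {0..norm z} s \<partial>lborel)"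
      using True by (simp add: K_def)
    also have "\<dots> = (\<integral>\<^sup>+s. indicator {-1..0::real} s \<partial>lborel) + (\<integral>\<^sup>+s. ennreal (f s) * indicator {0..norm z} s \<partial>lborel)"
      by (rule nn_integral_add) measurable
    also have "(\<integral>\<^sup>+s. indicator {-1..0::real} s \<partial>lborel) = 1"
      by (simp add: nn_integral_indicator)
    also have "(\<integral>\<^sup>+s. ennreal (f s) * indicator {0..norm z} s \<partial>lborel)
        = ennreal ((1 - norm z) powr (-\<beta>) - (1 - 0) powr (-\<beta>))"
    proof (rule nn_integral_FTC_Icc)
      show "f \<in> borel_measurable borel" by (rule fm)
      show "DERIV (\<lambda>s. (1 - s) powr (-\<beta>)) x :> f x" if "x \<in> {0..norm z}" for x
      proof -
        have x1: "x < 1" using that z1 by simp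
        show ?thesis unfolding f_def using x1
          by (auto intro!: derivative_eq_intros simp: algebra_simps)
      qed
      show "0 \<le> f x" for x by (rule f0)
      show "0 \<le> norm z" by simp
    qed
    finally have eq: "(\<integral>\<^sup>+s. K z s \<partial>lborel) = 1 + ennreal ((1 - norm z) powr (-\<beta>) - 1)" by simp
    have "ennreal ((1 - norm z) powr (-\<beta>)) \<le> 1 + ennreal ((1 - norm z) powr (-\<beta>) - 1)"
    proof (cases "(1 - norm z) powr (-\<beta>) \<ge> 1")
      case True
      have "ennreal 1 + ennreal ((1 - norm z) powr (-\<beta>) - 1) = ennreal (1 + ((1 - norm z) powr (-\<beta>) - 1))"
        using True by (intro ennreal_plus[symmetric]) auto
      then show ?thesis by simp
    next
      case False
      then have "ennreal ((1 - norm z) powr (-\<beta>)) \<le> 1" by (simp add: ennreal_le_1)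
      then show ?thesis by (rule order_trans) simp
    qed
    then show ?thesis using True eq by simp
  qed
  have meas: "case_prod K \<in> borel_measurable (lborel \<Otimes>\<^sub>M lborel)"
  proof -
    have e1: "unit_disk \<times> (UNIV::real set) \<in> sets borel" by (intro borel_open open_Times) auto
    have e2: "{p::complex\<times>real. 0 \<le> snd p \<and> snd p \<le> norm (fst p)} \<in> sets borel"
      by (intro borel_closed closed_Collect_conj closed_Collect_le continuous_intros)
    have e3: "(UNIV::complex set) \<times> {-1..0::real} \<in> sets borel" by (intro borel_closed closed_Times) auto
    have m3: "(\<lambda>p::complex\<times>real. f (snd p)) \<in> borel_measurable borel"
      by (rule measurable_compose[OF _ fm]) (intro borel_measurable_continuous_onI continuous_intros)
    have "(\<lambda>p::complex\<times>real. indicator (unit_disk \<times> (UNIV::real set)) p *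
           (indicator (UNIV \<times> {-1..0::real}) p + ennreal (f (snd p)) * indicator {p::complex\<times>real. 0 \<le> snd p \<and> snd p \<le> norm (fst p)} p) :: ennreal)
          \<in> borel_measurable borel"
      by (intro borel_measurable_times_ennreal borel_measurable_add borel_measurable_indicator e1 e2 e3
            measurable_compose[OF m3 measurable_ennreal])
    moreover have "case_prod K = (\<lambda>p::complex\<times>real. indicator (unit_disk \<times> (UNIV::real set)) p *
           (indicator (UNIV \<times> {-1..0::real}) p + ennreal (f (snd p)) * indicator {p::complex\<times>real. 0 \<le> snd p \<and> snd p \<le> norm (fst p)} p) :: ennreal)"
      by (auto simp: K_def fun_eq_iff indicator_def)
    ultimately show ?thesis by (simp add: lborel_prod)
  qed
  have inner: "(\<integral>\<^sup>+z. K z s \<partial>lborel) \<le> ennreal (pi * indicator {-1..0} s) + ennreal pi * (ennreal \<beta> * ennreal ((1 - s) powr (-\<beta>) * (1 + s) * indicator {0..1} s))" for s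
  proof -
    define A where "A = unit_disk \<inter> {z. 0 \<le> s \<and> s \<le> norm z}"
    have Am: "A \<in> sets lborel"
    proof -
      have "closed {z::complex. 0 \<le> s \<and> s \<le> norm z}"
        by (cases "0 \<le> s") (auto intro: closed_Collect_le continuous_intros)
      then show ?thesis unfolding A_def by auto
    qed
    have "(\<integral>\<^sup>+z. K z s \<partial>lborel) = (\<integral>\<^sup>+z. indicator {-1..0} s * indicator unit_disk z + ennreal (f s) * indicator A z \<partial>lborel)"
      by (intro nn_integral_cong) (auto simp: K_def A_def indicator_def)
    also have "\<dots> = (\<integral>\<^sup>+z. indicator {-1..0} s * indicator unit_disk z \<partial>lborel) + (\<integral>\<^sup>+z. ennreal (f s) * indicator A z \<partial>lborel)"
      using Am by (intro nn_integral_add) (auto intro!: borel_measurable_times_ennreal borel_measurable_indicator borel_open)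
    also have "\<dots> = indicator {-1..0} s * ennreal pi + ennreal (f s) * emeasure lborel A"
      using Am by (simp add: nn_integral_cmult_indicator em_disk)
    also have "indicator {-1..0} s * ennreal pi = ennreal (pi * indicator {-1..0} s)"
      by (simp add: indicator_def)
    also have "ennreal (f s) * emeasure lborel A \<le> ennreal pi * (ennreal \<beta> * ennreal ((1 - s) powr (-\<beta>) * (1 + s) * indicator {0..1} s))"
    proof (cases "0 \<le> s \<and> s \<le> 1")
      case False
      then have "A = {}" unfolding A_def by (auto simp: not_le)
      then show ?thesis by simp
    next
      case True
      have "A = unit_disk - ball 0 s" unfolding A_def using True by auto
      hence "emeasure lborel A = emeasure lborel unit_disk - emeasure lborel (ball (0::complex) s)"
        using True by (simp, intro emeasure_Diff) (auto simp: em_ball)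
      also have "\<dots> = ennreal (pi - pi * s^2)"
        using True by (simp add: em_ball em_disk ennreal_minus power_le_one)
      finally have Aeq: "emeasure lborel A = ennreal (pi - pi * s^2)" .
      have "f s * (pi - pi * s^2) = pi * (\<beta> * ((1 - s) powr (-\<beta>) * (1 + s)))"
      proof (cases "s = 1")
        case True then show ?thesis by (simp add: f_def)
      next
        case False
        hence s1: "s < 1" using \<open>0 \<le> s \<and> s \<le> 1\<close> by simp
        have "(1 - s) powr (-\<beta>) = (1 - s) powr ((-\<beta> - 1) + 1)" by simp
        also have "\<dots> = (1 - s) powr (-\<beta> - 1) * (1 - s)" unfolding powr_add using s1 by simp
        finally have eq: "(1 - s) powr (-\<beta>) = (1 - s) powr (-\<beta> - 1) * (1 - s)" .
        show ?thesis unfolding f_def eq using aux1[of \<beta> "(1 - s) powr (-\<beta> - 1)" s] by (simp only: mult.assoc)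
      qed
      hence "ennreal (f s) * emeasure lborel A = ennreal (pi * (\<beta> * ((1 - s) powr (-\<beta>) * (1 + s))))"
        unfolding Aeq using ennreal_mult'[OF f0[of s], of "pi - pi * s^2"] by simp
      also have "\<dots> = ennreal pi * (ennreal \<beta> * ennreal ((1 - s) powr (-\<beta>) * (1 + s) * indicator {0..1} s))"
      proof -
        have ind: "indicator {0..1} s = (1::real)" using True by simp
        moreover have "ennreal (pi * (\<beta> * X)) = ennreal pi * (ennreal \<beta> * ennreal X)" for X
          using b0 by (simp add: ennreal_mult' mult.assoc)
        ultimately show ?thesis by (simp only: ind mult_1_right)
      qed
      finally show ?thesis by (rule eq_refl)
    qed
    finally show ?thesis by (meson add_left_mono)
  qed
  have "(\<integral>\<^sup>+z. ennreal (indicator unit_disk z * (1 - norm z) powr (-\<beta>)) \<partial>lborel)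
      \<le> (\<integral>\<^sup>+z. (\<integral>\<^sup>+s. K z s \<partial>lborel) \<partial>lborel)"
    by (intro nn_integral_mono stepa)
  also have "\<dots> = (\<integral>\<^sup>+s. (\<integral>\<^sup>+z. K z s \<partial>lborel) \<partial>lborel)"
    by (rule tonelli_cr[OF meas])
  also have "\<dots> \<le> (\<integral>\<^sup>+s. ennreal (pi * indicator {-1..0} s) + ennreal pi * (ennreal \<beta> * ennreal ((1 - s) powr (-\<beta>) * (1 + s) * indicator {0..1} s)) \<partial>lborel)"
    by (intro nn_integral_mono inner)
  also have "\<dots> = (\<integral>\<^sup>+s. ennreal (pi * indicator {-1..0::real} s) \<partial>lborel) + ennreal pi * (ennreal \<beta> * (\<integral>\<^sup>+s. ennreal ((1 - s) powr (-\<beta>) * (1 + s) * indicator {0..1} s) \<partial>lborel))"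
    by (rule add_split) measurable
  also have "(\<integral>\<^sup>+s. ennreal (pi * indicator {-1..0::real} s) \<partial>lborel) = ennreal pi"
  proof -
    have "(\<integral>\<^sup>+s. ennreal (pi * indicator {-1..0::real} s) \<partial>lborel) = (\<integral>\<^sup>+s. ennreal pi * indicator {-1..0::real} s \<partial>lborel)"
      by (intro nn_integral_cong) (simp add: indicator_def)
    also have "\<dots> = ennreal pi" by (simp add: nn_integral_cmult_indicator)
    finally show ?thesis .
  qed
  also have "(\<integral>\<^sup>+s. ennreal ((1 - s) powr (-\<beta>) * (1 + s) * indicator {0..1} s) \<partial>lborel) = ennreal (2/(1-\<beta>) - 1/(2-\<beta>))"
    by (rule sing_int[OF b0 b1])
  also have "ennreal pi + ennreal pi * (ennreal \<beta> * ennreal (2/(1-\<beta>) - 1/(2-\<beta>))) = ennreal (2 * pi / ((1 - \<beta>) * (2 - \<beta>)))"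
  proof -
    have p: "2/(1-\<beta>) - 1/(2-\<beta>) \<ge> 0"
    proof -
      have "1/(2-\<beta>) \<le> 1" using b1 by (simp add: divide_le_eq)
      moreover have "1 \<le> 2/(1-\<beta>)" using b0 b1 by (simp add: le_divide_eq)
      ultimately show ?thesis by simp
    qed
    have "ennreal pi + ennreal pi * (ennreal \<beta> * ennreal (2/(1-\<beta>) - 1/(2-\<beta>))) = ennreal (pi + pi * (\<beta> * (2/(1-\<beta>) - 1/(2-\<beta>))))"
    proof -
      have X: "0 \<le> 2/(1-\<beta>) - 1/(2-\<beta>)" by (rule p)
      have "ennreal \<beta> * ennreal (2/(1-\<beta>) - 1/(2-\<beta>)) = ennreal (\<beta> * (2/(1-\<beta>) - 1/(2-\<beta>)))" using b0 X by (rule ennreal_mult[symmetric])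
      moreover have "ennreal pi * ennreal (\<beta> * (2/(1-\<beta>) - 1/(2-\<beta>))) = ennreal (pi * (\<beta> * (2/(1-\<beta>) - 1/(2-\<beta>))))" using b0 X by (intro ennreal_mult[symmetric]) auto
      moreover have "ennreal pi + ennreal (pi * (\<beta> * (2/(1-\<beta>) - 1/(2-\<beta>)))) = ennreal (pi + pi * (\<beta> * (2/(1-\<beta>) - 1/(2-\<beta>))))" using b0 X by (intro ennreal_plus[symmetric]) auto
      ultimately show ?thesis by simp
    qed
    also have "pi + pi * (\<beta> * (2/(1-\<beta>) - 1/(2-\<beta>))) = 2 * pi / ((1 - \<beta>) * (2 - \<beta>))"
    proof -
      have nz: "1 - \<beta> \<noteq> 0" "2 - \<beta> \<noteq> 0" using b1 by auto
      have D: "(1 - \<beta>) * (2 - \<beta>) \<noteq> 0" using nz by simp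
      have "2/(1-\<beta>) - 1/(2-\<beta>) = (3 - \<beta>) / ((1 - \<beta>) * (2 - \<beta>))"
        using nz by (simp add: divide_simps)
      moreover have "pi + pi * (\<beta> * ((3 - \<beta>) / ((1 - \<beta>) * (2 - \<beta>)))) = pi * ((1 - \<beta>) * (2 - \<beta>) + \<beta> * (3 - \<beta>)) / ((1 - \<beta>) * (2 - \<beta>))"
        using D by (simp add: divide_simps distrib_left)
      moreover have "(1 - \<beta>) * (2 - \<beta>) + \<beta> * (3 - \<beta>) = 2" by (simp add: algebra_simps)
      ultimately show ?thesis by simp
    qed
    finally show ?thesis .
  qed
  finally show ?thesis .
qed



lemma norm_int_le: "norm (integral\<^sup>L M f) \<le> (\<integral>\<^sup>+x. norm (f x) \<partial>M)"
  for f :: "'a \<Rightarrow> 'b::{banach, second_countable_topology}"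
  by (cases "integrable M f") (auto simp: integral_norm_bound_ennreal not_integrable_integral_eq)

lemma g_bound:
  fixes \<mu> :: "complex \<Rightarrow> complex" and z :: complex
  assumes ae: "AE w in lebesgue. w \<in> unit_disk \<longrightarrow> norm (\<mu> w) \<le> 1"
    and z: "z \<in> unit_disk"
  shows "norm (bergman_proj \<mu> z) \<le> 3 + 2 * ln (1 / (1 - norm z))"
proof -
  define I where "I = (LINT w : unit_disk | lebesgue. \<mu> w / (1 - z * cnj w) ^ 2)"
  have z1: "norm z < 1" using z by simp
  have L0: "0 \<le> ln (1 / (1 - norm z))" using z1 by simp
  have "ennreal (norm I) \<le> (\<integral>\<^sup>+w. norm (indicator unit_disk w *\<^sub>R (\<mu> w / (1 - z * cnj w) ^ 2)) \<partial>lebesgue)"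
    unfolding I_def set_lebesgue_integral_def by (rule norm_int_le)
  also have "\<dots> \<le> (\<integral>\<^sup>+w. ennreal (indicator unit_disk w / (norm (1 - z * cnj w))^2) \<partial>lebesgue)"
  proof (rule nn_integral_mono_AE)
    show "AE w in lebesgue. ennreal (norm (indicator unit_disk w *\<^sub>R (\<mu> w / (1 - z * cnj w) ^ 2)))
           \<le> ennreal (indicator unit_disk w / (norm (1 - z * cnj w))^2)"
      using ae
    proof eventually_elim
      case (elim w)
      show ?case
      proof (cases "w \<in> unit_disk")
        case True
        hence "norm (\<mu> w) \<le> 1" using elim by simp
        hence "norm (\<mu> w) / (norm (1 - z * cnj w))^2 \<le> 1 / (norm (1 - z * cnj w))^2"
          by (intro divide_right_mono) auto
        then show ?thesis using True by (simp add: norm_divide norm_power)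
      qed simp
    qed
  qed
  also have "\<dots> = (\<integral>\<^sup>+w. ennreal (indicator unit_disk w / (norm (1 - z * cnj w))^2) \<partial>lborel)"
    by (rule nn_integral_completion)
  also have "\<dots> \<le> ennreal (pi * (3 + 2 * ln (1 / (1 - norm z))))"
  proof (cases "z = 0")
    case True
    have "(\<integral>\<^sup>+w. ennreal (indicator unit_disk w / (norm (1 - z * cnj w))^2) \<partial>lborel)
        = (\<integral>\<^sup>+w. indicator unit_disk w \<partial>lborel)"
      using True by (intro nn_integral_cong) (simp add: indicator_def)
    also have "\<dots> = ennreal pi" by (simp add: em_disk)
    also have "\<dots> \<le> ennreal (pi * (3 + 2 * ln (1 / (1 - norm z))))"
      using True by simp
    finally show ?thesis .
  next
    case False
    have "(\<integral>\<^sup>+w. ennreal (indicator unit_disk w / (norm (1 - z * cnj w))^2) \<partial>lborel)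
     \<le> ennreal (pi * (ln (1 + ((1 - norm z)/norm z)^2) - 2 * ln ((1 - norm z)/norm z)) / (norm z)^2)"
      by (rule kernel_int_bound[OF False z1])
    also have "\<dots> \<le> ennreal (pi * (3 + 2 * ln (1 / (1 - norm z))))"
    proof (rule ennreal_leI)
      have "(ln (1 + ((1 - norm z)/norm z)^2) - 2 * ln ((1 - norm z)/norm z)) / (norm z)^2 \<le> 3 + 2 * ln (1 / (1 - norm z))"
        using B_bound[of "norm z"] False z1 by simp
      then show "pi * (ln (1 + ((1 - norm z)/norm z)^2) - 2 * ln ((1 - norm z)/norm z)) / (norm z)^2
          \<le> pi * (3 + 2 * ln (1 / (1 - norm z)))"
        by (simp add: times_divide_eq_right[symmetric] del: times_divide_eq_right)
    qed
    finally show ?thesis .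
  qed
  finally have "norm I \<le> pi * (3 + 2 * ln (1 / (1 - norm z)))"
    using L0 by (subst (asm) ennreal_le_iff) auto
  moreover have "norm (bergman_proj \<mu> z) = norm I / pi"
    by (simp add: bergman_proj_def I_def norm_mult norm_divide)
  ultimately show ?thesis by (simp add: divide_le_eq mult.commute)
qed

lemma final_num:
  fixes a :: real assumes a0: "0 \<le> a" and a1: "a \<le> pi / 16"
  shows "exp (3 * a) * (2 / ((1 - 2 * a) * (2 - 2 * a))) \<le> 4"
proof -
  have api: "a \<le> 19635 / 100000" using a1 pi_approx(2) by simp
  have e: "exp (3 * a) \<le> 1 + 3 * a + (3 * a)^2" using a0 api by (intro exp_bound) auto
  have D: "(1 - 2 * a) * (2 - 2 * a) > 0" using api by (intro mult_pos_pos) auto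
  have "2 * (1 + 3 * a + (3 * a)^2) \<le> 4 * ((1 - 2 * a) * (2 - 2 * a))"
  proof -
    have "2 * a^2 + 30 * a \<le> 6"
    proof -
      have "a^2 \<le> (1/5)^2" using a0 api by (intro power_mono) auto
      hence "a^2 \<le> 1/25" by (simp add: power2_eq_square)
      thus ?thesis using api by linarith
    qed
    thus ?thesis by (simp add: algebra_simps power2_eq_square)
  qed
  hence "(1 + 3 * a + (3 * a)^2) * (2 / ((1 - 2 * a) * (2 - 2 * a))) \<le> 4"
    using D by (simp add: divide_simps mult.commute)
  moreover have "exp (3 * a) * (2 / ((1 - 2 * a) * (2 - 2 * a))) \<le> (1 + 3 * a + (3 * a)^2) * (2 / ((1 - 2 * a) * (2 - 2 * a)))"
    using e D by (intro mult_right_mono) auto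
  ultimately show ?thesis by linarith
qed

theorem mainTheorem2:
  fixes \<mu> :: "complex \<Rightarrow> complex" and t :: complex
  assumes "set_borel_measurable lebesgue unit_disk \<mu>"
    and "AE w in lebesgue. w \<in> unit_disk \<longrightarrow> norm (\<mu> w) \<le> 1"
    and "norm t \<le> pi / 16"
  shows "ennreal (1 / pi) *
           (\<integral>\<^sup>+ z \<in> unit_disk. ennreal (norm (exp (t * bergman_proj \<mu> z))) \<partial>lebesgue)
         \<le> 4"
proof -
  define a where "a = norm t"
  have a0: "0 \<le> a" and a1: "a \<le> pi / 16" using assms(3) by (auto simp: a_def)
  have a2: "2 * a < 1" using a1 pi_less_4 by simp
  have pw: "ennreal (norm (exp (t * bergman_proj \<mu> z))) * indicator unit_disk z
      \<le> ennreal (exp (3 * a)) * ennreal (indicator unit_disk z * (1 - norm z) powr (-(2 * a)))" for z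
  proof (cases "z \<in> unit_disk")
    case False then show ?thesis by simp
  next
    case True
    have z1: "norm z < 1" using True by simp
    have gb: "norm (bergman_proj \<mu> z) \<le> 3 + 2 * ln (1 / (1 - norm z))"
      by (rule g_bound[OF assms(2) True])
    have "norm (exp (t * bergman_proj \<mu> z)) = exp (Re (t * bergman_proj \<mu> z))" by simp
    also have "\<dots> \<le> exp (a * (3 + 2 * ln (1 / (1 - norm z))))"
    proof -
      have "Re (t * bergman_proj \<mu> z) \<le> norm (t * bergman_proj \<mu> z)" by (rule complex_Re_le_cmod)
      also have "\<dots> = a * norm (bergman_proj \<mu> z)" by (simp add: a_def norm_mult)
      also have "\<dots> \<le> a * (3 + 2 * ln (1 / (1 - norm z)))" using gb a0 by (rule mult_left_mono)
      finally show ?thesis by simp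
    qed
    also have "\<dots> = exp (3 * a) * (1 - norm z) powr (-(2 * a))"
      using z1 by (simp add: powr_def exp_add[symmetric] ln_div algebra_simps)
    finally have "norm (exp (t * bergman_proj \<mu> z)) \<le> exp (3 * a) * (1 - norm z) powr (-(2 * a))" .
    then show ?thesis using True by (simp add: ennreal_mult[symmetric])
  qed
  have "(\<integral>\<^sup>+ z \<in> unit_disk. ennreal (norm (exp (t * bergman_proj \<mu> z))) \<partial>lebesgue)
     \<le> (\<integral>\<^sup>+ z. ennreal (exp (3 * a)) * ennreal (indicator unit_disk z * (1 - norm z) powr (-(2 * a))) \<partial>lebesgue)"
    by (intro nn_integral_mono pw)
  also have "\<dots> = (\<integral>\<^sup>+ z. ennreal (exp (3 * a)) * ennreal (indicator unit_disk z * (1 - norm z) powr (-(2 * a))) \<partial>lborel)"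
    by (rule nn_integral_completion)
  also have "\<dots> = ennreal (exp (3 * a)) * (\<integral>\<^sup>+ z. ennreal (indicator unit_disk z * (1 - norm z) powr (-(2 * a))) \<partial>lborel)"
  proof (rule nn_integral_cmult)
    have [measurable]: "unit_disk \<in> sets borel" by (simp add: borel_open)
    have [measurable]: "(\<lambda>x::complex. (1 - cmod x) powr -(2*a)) \<in> borel_measurable borel"
      by (intro powr_real_measurable borel_measurable_continuous_onI continuous_intros)
    show "(\<lambda>z. ennreal (indicator unit_disk z * (1 - norm z) powr (-(2 * a)))) \<in> borel_measurable lborel"
      by measurable
  qed
  also have "\<dots> \<le> ennreal (exp (3 * a)) * ennreal (2 * pi / ((1 - 2 * a) * (2 - 2 * a)))"
    using a0 a2 by (intro mult_left_mono radial_int) auto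
  finally have I: "(\<integral>\<^sup>+ z \<in> unit_disk. ennreal (norm (exp (t * bergman_proj \<mu> z))) \<partial>lebesgue)
      \<le> ennreal (exp (3 * a)) * ennreal (2 * pi / ((1 - 2 * a) * (2 - 2 * a)))" .
  have D: "(1 - 2 * a) * (2 - 2 * a) > 0" using a2 by (intro mult_pos_pos) auto
  have "ennreal (1 / pi) * (ennreal (exp (3 * a)) * ennreal (2 * pi / ((1 - 2 * a) * (2 - 2 * a))))
      = ennreal (exp (3 * a) * (2 / ((1 - 2 * a) * (2 - 2 * a))))"
    using D by (simp add: ennreal_mult[symmetric] mult_ac)
  also have "\<dots> \<le> ennreal 4" using final_num[OF a0 a1] by (rule ennreal_leI)
  finally have "ennreal (1 / pi) * (ennreal (exp (3 * a)) * ennreal (2 * pi / ((1 - 2 * a) * (2 - 2 * a)))) \<le> 4" by simp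
  moreover have "ennreal (1 / pi) * (\<integral>\<^sup>+ z \<in> unit_disk. ennreal (norm (exp (t * bergman_proj \<mu> z))) \<partial>lebesgue)
      \<le> ennreal (1 / pi) * (ennreal (exp (3 * a)) * ennreal (2 * pi / ((1 - 2 * a) * (2 - 2 * a))))"
    using I by (rule mult_left_mono) simp
  ultimately show ?thesis by (rule order_trans[rotated])
qed


end
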